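(* Let $\lambda>0$, $\xi>0$, $v_2<v_1$ with either $v_2<0<v_1$ or $0<v_2<v_1$, and let $\tilde p(x,t|v_j)$ be the (generalized) density of the position $\tilde X(t)$ of the extended telegraph process driven by GCPs with parameter $\lambda$ with Poissonian resets to the origin at rate $\xi$, conditional on $\tilde X(0)=0$, $V(0)=v_j$. Then for $x\in\mathbb R$ and $j=1,2$, $\tilde p(x|v_j):=\lim_{t\to+\infty}\tilde p(x,t|v_j)$ is given by $$ \tilde p(x|v_j)=\mathrm{sgn}(v_j)\mathbb 1_{\{x/v_j>0\}}\frac{\xi e^{-\xi x/v_j}}{v_j+\lambda x}+\frac{\xi e^{\xi/\lambda}}{v_1-v_2}\Gamma\Big[0,\Big(M_x+\frac1\lambda\Big)\xi\Big]\quad\text{if } v_2<0<v_1, $$ $$ \tilde p(x|v_j)=\mathbb 1_{\{x>0\}}\Big\{\frac{\xi e^{-\xi x/v_j}}{v_j+\lambda x}+\frac{\xi e^{\xi/\lambda}}{v_1-v_2}\Gamma\Big[0,\Big(\frac x{v_1}+\frac1\lambda\Big)\xi,\Big(\frac x{v_2}+\frac1\lambda\Big)\xi\Big]\Big\}\quad\text{if } 0<v_2<v_1. $$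
   Context: GCP with intensity $\lambda>0$: a Poisson process whose rate is random, exponentially distributed with mean $\lambda$; increments satisfy $P\{\tilde N_\lambda(t+s)-\tilde N_\lambda(t)=k\}=\frac{1}{1+\lambda s}(\frac{\lambda s}{1+\lambda s})^k$. The process: a particle starts at the origin with velocity $V(0)=v_j$ ($v_1,v_2\ne0$, $v_2<v_1$), moves with velocity alternating between $v_1$ and $v_2$, the periods at velocity $v_1$ and at $v_2$ being governed by two independent GCPs of intensity $\lambda$; additionally it is instantaneously reset to the origin at the epochs of an independent Poisson process of rate $\xi$, restarting afresh with velocity $v_j$. Equivalently $\tilde p(x,t|v_j)=e^{-\xi t}p(x,t|v_j)+\xi\int_0^te^{-\xi s}p(x,s|v_j)ds$, where $p(x,t|v_j)=\frac{\delta(x-v_jt)}{1+\lambda t}+\mathbb 1_{\{v_2t<x<v_1t\}}\frac{\lambda}{(v_1-v_2)(1+\lambda t)}$ is the generalized density without resets ($\delta$ the Dirac delta). Notation: $M_x=\max\{x/v_1,x/v_2\}$; $\Gamma(a,z)=\int_z^\infty s^{a-1}e^{-s}ds$ (upper incomplete gamma function); $\Gamma(a,z_0,z_1)=\int_{z_0}^{z_1}s^{a-1}e^{-s}ds$. *)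

theory Defs
  imports "HOL-Analysis.Analysis"
begin

text \<open>Probability, under the generalized density
  p(x,s|v_j) = delta(x - v_j s)/(1+lambda s) + 1_{v_2 s < x < v_1 s} lambda/((v_1-v_2)(1+lambda s)),
  of a Borel set A, i.e. the integral of p(.,s|v_j) over A (the Dirac part contributes
  1_A(v_j s)/(1+lambda s)).\<close>
definition p_prob :: "real \<Rightarrow> real \<Rightarrow> real \<Rightarrow> real \<Rightarrow> real \<Rightarrow> real set \<Rightarrow> real" where
  "p_prob lam v1 v2 vj s A =
     indicator A (vj * s) / (1 + lam * s)
     + (\<integral>x\<in>A. indicator {v2 * s <..< v1 * s} x * (lam / ((v1 - v2) * (1 + lam * s))) \<partial>lborel)"

definition ptilde_prob :: "real \<Rightarrow> real \<Rightarrow> real \<Rightarrow> real \<Rightarrow> real \<Rightarrow> real \<Rightarrow> real set \<Rightarrow> real" where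
  "ptilde_prob lam xi v1 v2 vj t A =
     exp (- xi * t) * p_prob lam v1 v2 vj t A
     + xi * (\<integral>s\<in>{0..t}. exp (- xi * s) * p_prob lam v1 v2 vj s A \<partial>lborel)"

definition upper_Gamma0 :: "real \<Rightarrow> real" where
  "upper_Gamma0 z = (\<integral>s\<in>{z..}. exp (- s) / s \<partial>lborel)"

definition Gamma0_between :: "real \<Rightarrow> real \<Rightarrow> real" where
  "Gamma0_between z0 z1 = (\<integral>s\<in>{z0..z1}. exp (- s) / s \<partial>lborel)"

definition Mx :: "real \<Rightarrow> real \<Rightarrow> real \<Rightarrow> real" where
  "Mx v1 v2 x = max (x / v1) (x / v2)"

end

theory Submission imports Defs "HOL-Probability.Distributions" begin

lemma exp_tail:
  fixes xi a :: real assumes xi: "xi > 0"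
  shows "(\<integral>\<^sup>+s. ennreal (xi * exp (- xi * s)) * indicator {a..} s \<partial>lborel) = ennreal (exp (- xi * a))"
proof -
  have "(\<integral>\<^sup>+s. ennreal (xi * exp (- xi * s)) * indicator {a..} s \<partial>lborel)
     = ennreal \<bar>1/xi\<bar> * (\<integral>\<^sup>+u. ennreal (xi * exp (- xi * (a + 1/xi * u))) * indicator {a..} (a + 1/xi * u) \<partial>lborel)"
    by (rule nn_integral_real_affine) (use xi in auto)
  also have "(\<lambda>u. ennreal (xi * exp (- xi * (a + 1/xi * u))) * indicator {a..} (a + 1/xi * u))
      = (\<lambda>u. ennreal (xi * exp (- xi * a)) * (ennreal (u^0 * exp (-u)) * indicator {0..} u))"
  proof
    fix u
    have e: "exp (- xi * (a + 1/xi * u)) = exp (- xi * a) * exp (-u)"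
      using xi by (simp add: algebra_simps exp_add[symmetric])
    have i: "indicator {a..} (a + 1/xi * u) = (indicator {0..} u :: ennreal)"
      using xi by (auto simp: indicator_def field_simps)
    show "ennreal (xi * exp (- xi * (a + 1/xi * u))) * indicator {a..} (a + 1/xi * u)
      = ennreal (xi * exp (- xi * a)) * (ennreal (u^0 * exp (-u)) * indicator {0..} u)"
      unfolding e i using xi by (simp add: ennreal_mult' mult.assoc)
  qed
  also have "(\<integral>\<^sup>+u. ennreal (xi * exp (- xi * a)) * (ennreal (u^0 * exp (-u)) * indicator {0..} u) \<partial>lborel)
     = ennreal (xi * exp (- xi * a)) * (\<integral>\<^sup>+u. ennreal (u^0 * exp (-u)) * indicator {0..} u \<partial>lborel)"
    by (rule nn_integral_cmult) auto
  also have "(\<integral>\<^sup>+u. ennreal (u^0 * exp (-u)) * indicator {0..} u \<partial>lborel) = 1"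
    using nn_intergal_power_times_exp_Ici[of 0] by simp
  finally show ?thesis using xi by (simp add: ennreal_mult'[symmetric])
qed


definition fD :: "real \<Rightarrow> real \<Rightarrow> real \<Rightarrow> real \<Rightarrow> real" where
  "fD lam xi vj x = sgn vj * (if x / vj > 0 then 1 else 0) * (xi * exp (- xi * x / vj) / (vj + lam * x))"

definition NN :: "real set \<Rightarrow> ennreal" where
  "NN U = (\<integral>\<^sup>+u. ennreal (indicator U u * (exp (- u) / u)) \<partial>lborel)"

lemma ind_Ioo: "indicator {a<..<b} x = (if a < x \<and> x < b then 1 else (0::'b::zero_neq_one))"
  by (simp add: indicator_def)

lemma fD_nonneg:
  assumes "lam > 0" "vj \<noteq> 0" "xi \<ge> 0" shows "0 \<le> fD lam xi vj x"
proof (cases "x / vj > 0")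
  case True
  show ?thesis
  proof (cases "vj > 0")
    case True
    with \<open>x / vj > 0\<close> have "x > 0" by (simp add: zero_less_divide_iff)
    with True assms show ?thesis unfolding fD_def by (simp add: sgn_if)
  next
    case False
    with assms have "vj < 0" by simp
    with \<open>x / vj > 0\<close> have "x < 0" by (simp add: zero_less_divide_iff)
    with \<open>vj < 0\<close> assms have "vj + lam * x < 0" by (smt (verit) mult_pos_neg)
    with \<open>vj < 0\<close> assms(3) show ?thesis unfolding fD_def
      by (simp add: sgn_if divide_nonneg_neg)
  qed
qed (simp add: fD_def)

lemma fD_meas[measurable]: "fD lam xi vj \<in> borel_measurable borel"
  unfolding fD_def by measurable

lemma Dpart:
  assumes lam: "lam > 0" and vj: "vj \<noteq> 0" and A[measurable]: "A \<in> sets borel"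
  shows "(\<integral>\<^sup>+s. ennreal (indicator {0..} s * (xi * exp (- xi * s) * (indicator A (vj * s) / (1 + lam * s)))) \<partial>lborel)
    = (\<integral>\<^sup>+x. ennreal (indicator A x * fD lam xi vj x) \<partial>lborel)"
proof -
  have pt: "\<bar>vj\<bar> * (indicator A (vj * s) * fD lam xi vj (vj * s))
      = indicator {0..} s * (xi * exp (- xi * s) * (indicator A (vj * s) / (1 + lam * s)))"
    if "s \<noteq> 0" for s
  proof (cases "s > 0")
    case True
    have e: "- xi * (vj * s) / vj = - xi * s" using vj by simp
    have d: "vj + lam * (vj * s) = vj * (1 + lam * s)" by (simp add: algebra_simps)
    have "\<bar>vj\<bar> * sgn vj = vj" by (simp add: sgn_if)
    have p: "1 + lam * s > 0" using True lam by (simp add: add_pos_pos)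
    have "fD lam xi vj (vj * s) = sgn vj * (xi * exp (- xi * s) / (vj * (1 + lam * s)))"
      unfolding fD_def e d using True vj by simp
    moreover have "\<And>a E P. P \<noteq> 0 \<Longrightarrow> \<bar>vj\<bar> * (a * (sgn vj * (E / (vj * P)))) = a * E / P"
      using vj by (cases "vj > 0") (auto simp: field_simps sgn_if)
    ultimately show ?thesis using True p by simp
  next
    case False
    with that have "s < 0" by simp
    then show ?thesis using vj unfolding fD_def by simp
  qed
  have "(\<integral>\<^sup>+x. ennreal (indicator A x * fD lam xi vj x) \<partial>lborel)
     = ennreal \<bar>vj\<bar> * (\<integral>\<^sup>+s. ennreal (indicator A (0 + vj * s) * fD lam xi vj (0 + vj * s)) \<partial>lborel)"
    by (rule nn_integral_real_affine) (use vj in auto)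
  also have "\<dots> = (\<integral>\<^sup>+s. ennreal (\<bar>vj\<bar> * (indicator A (vj * s) * fD lam xi vj (vj * s))) \<partial>lborel)"
    by (subst nn_integral_cmult[symmetric]) (auto intro!: nn_integral_cong simp: ennreal_mult'[symmetric])
  also have "\<dots> = (\<integral>\<^sup>+s. ennreal (indicator {0..} s * (xi * exp (- xi * s) * (indicator A (vj * s) / (1 + lam * s)))) \<partial>lborel)"
    apply (rule nn_integral_cong_AE)
    using AE_lborel_singleton[of 0] by eventually_elim (simp add: pt)
  finally show ?thesis by simp
qed

lemma Cnn:
  assumes lam: "lam > 0" and v12: "v2 < v1" and s: "s \<ge> 0" and A[measurable]: "A \<in> sets borel"
  defines "C \<equiv> set_lebesgue_integral lborel A (\<lambda>x. indicator {v2 * s <..< v1 * s} x * (lam / ((v1 - v2) * (1 + lam * s))))"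
  shows "ennreal C = (\<integral>\<^sup>+x. ennreal (indicator A x * (indicator {v2 * s <..< v1 * s} x * (lam / ((v1 - v2) * (1 + lam * s))))) \<partial>lborel)"
    and "0 \<le> C" and "C \<le> lam * s / (1 + lam * s)"
proof -
  define k where "k = lam / ((v1 - v2) * (1 + lam * s))"
  define N where "N = (\<integral>\<^sup>+x. ennreal (indicator A x * (indicator {v2 * s <..< v1 * s} x * k)) \<partial>lborel)"
  have p: "1 + lam * s > 0" using lam s by (simp add: add_pos_nonneg)
  have k0: "k \<ge> 0" unfolding k_def using lam v12 p by simp
  have C: "C = enn2real N"
    unfolding C_def set_lebesgue_integral_def N_def k_def[symmetric]
    by (subst integral_eq_nn_integral) (auto simp: indicator_def k0)
  have "N \<le> (\<integral>\<^sup>+x. ennreal k * indicator {v2 * s <..< v1 * s} x \<partial>lborel)"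
    unfolding N_def by (intro nn_integral_mono) (auto simp: indicator_def k0)
  also have "\<dots> = ennreal k * emeasure lborel {v2 * s <..< v1 * s}"
    by (simp add: nn_integral_cmult_indicator)
  also have "\<dots> = ennreal (k * ((v1 - v2) * s))"
  proof -
    have "v2 * s \<le> v1 * s" using v12 s by (simp add: mult_right_mono)
    then have "emeasure lborel {v2 * s <..< v1 * s} = ennreal ((v1 - v2) * s)"
      by (simp add: algebra_simps)
    then show ?thesis using k0 by (simp add: ennreal_mult')
  qed
  also have "k * ((v1 - v2) * s) = lam * s / (1 + lam * s)"
  proof -
    have "v1 - v2 \<noteq> 0" "1 + lam * s \<noteq> 0" using v12 p by auto
    moreover have "\<And>a P. a \<noteq> 0 \<Longrightarrow> P \<noteq> 0 \<Longrightarrow> lam / (a * P) * (a * s) = lam * s / P"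
      by (simp add: field_simps)
    ultimately show ?thesis unfolding k_def by blast
  qed
  finally have Nle: "N \<le> ennreal (lam * s / (1 + lam * s))" .
  then have Nfin: "N < top" using ennreal_less_top le_less_trans by blast
  show "ennreal C = (\<integral>\<^sup>+x. ennreal (indicator A x * (indicator {v2 * s <..< v1 * s} x * (lam / ((v1 - v2) * (1 + lam * s))))) \<partial>lborel)"
    using Nfin unfolding C N_def[symmetric] k_def[symmetric] by simp
  show "0 \<le> C" unfolding C by simp
  show "C \<le> lam * s / (1 + lam * s)"
    unfolding C using enn2real_mono[OF Nle] lam s p by simp
qed

lemma p_bounds:
  assumes lam: "lam > 0" and v12: "v2 < v1" and s: "s \<ge> 0" and A[measurable]: "A \<in> sets borel"
  shows "0 \<le> p_prob lam v1 v2 vj s A" "p_prob lam v1 v2 vj s A \<le> 1"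
proof -
  have p: "1 + lam * s > 0" using lam s by (simp add: add_pos_nonneg)
  note C = Cnn[OF lam v12 s A]
  have D: "0 \<le> indicator A (vj * s) / (1 + lam * s)" "indicator A (vj * s) / (1 + lam * s) \<le> 1 / (1 + lam * s)"
    using p by (auto simp: indicator_def)
  show "0 \<le> p_prob lam v1 v2 vj s A" unfolding p_prob_def using C(2) D by simp
  have "1 / (1 + lam * s) + lam * s / (1 + lam * s) = 1" using p by (simp add: field_simps)
  then show "p_prob lam v1 v2 vj s A \<le> 1" unfolding p_prob_def using C(3) D by linarith
qed

lemma p_meas[measurable]:
  assumes [measurable]: "A \<in> sets borel"
  shows "(\<lambda>s. p_prob lam v1 v2 vj s A) \<in> borel_measurable borel"
  unfolding p_prob_def set_lebesgue_integral_def ind_Ioo by measurable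

definition GG :: "real \<Rightarrow> real \<Rightarrow> real \<Rightarrow> real \<Rightarrow> real \<Rightarrow> ennreal" where
  "GG lam xi v1 v2 x = (\<integral>\<^sup>+s. ennreal (indicator {0..} s * (xi * exp (- xi * s) * (indicator {v2 * s <..< v1 * s} x * (lam / ((v1 - v2) * (1 + lam * s)))))) \<partial>lborel)"

lemma Cpart:
  assumes lam: "lam > 0" and v12: "v2 < v1" and xi: "xi > 0" and A[measurable]: "A \<in> sets borel"
  shows "(\<integral>\<^sup>+s. ennreal (indicator {0..} s * (xi * exp (- xi * s) * set_lebesgue_integral lborel A (\<lambda>x. indicator {v2 * s <..< v1 * s} x * (lam / ((v1 - v2) * (1 + lam * s)))))) \<partial>lborel)
   = (\<integral>\<^sup>+x. ennreal (indicator A x) * GG lam xi v1 v2 x \<partial>lborel)"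
proof -
  define F where "F x s = ennreal (indicator A x * (indicator {0..} s * (xi * exp (- xi * s) * (indicator {v2 * s <..< v1 * s} x * (lam / ((v1 - v2) * (1 + lam * s)))))))" for x s :: real
  have Fm: "case_prod F \<in> borel_measurable (lborel \<Otimes>\<^sub>M lborel)"
    unfolding F_def ind_Ioo by measurable
  have step1: "ennreal (indicator {0..} s * (xi * exp (- xi * s) * set_lebesgue_integral lborel A (\<lambda>x. indicator {v2 * s <..< v1 * s} x * (lam / ((v1 - v2) * (1 + lam * s))))))
      = (\<integral>\<^sup>+x. F x s \<partial>lborel)" for s
  proof (cases "s \<ge> 0")
    case True
    have c0: "0 \<le> xi * exp (- xi * s)" using xi by simp
    have "ennreal (indicator {0..} s * (xi * exp (- xi * s) * set_lebesgue_integral lborel A (\<lambda>x. indicator {v2 * s <..< v1 * s} x * (lam / ((v1 - v2) * (1 + lam * s))))))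
       = ennreal (xi * exp (- xi * s)) * ennreal (set_lebesgue_integral lborel A (\<lambda>x. indicator {v2 * s <..< v1 * s} x * (lam / ((v1 - v2) * (1 + lam * s)))))"
    proof -
      have "indicator {0..} s = (1::real)" using True by simp
      then show ?thesis by (simp only: mult_1 ennreal_mult'[OF c0])
    qed
    also have "\<dots> = ennreal (xi * exp (- xi * s)) * (\<integral>\<^sup>+x. ennreal (indicator A x * (indicator {v2 * s <..< v1 * s} x * (lam / ((v1 - v2) * (1 + lam * s))))) \<partial>lborel)"
      using Cnn(1)[OF lam v12 True A] by simp
    also have "\<dots> = (\<integral>\<^sup>+x. ennreal (xi * exp (- xi * s)) * ennreal (indicator A x * (indicator {v2 * s <..< v1 * s} x * (lam / ((v1 - v2) * (1 + lam * s))))) \<partial>lborel)"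
      by (subst nn_integral_cmult) (auto simp: ind_Ioo)
    also have "\<dots> = (\<integral>\<^sup>+x. F x s \<partial>lborel)"
      unfolding F_def using True c0
      by (intro nn_integral_cong) (simp add: ennreal_mult'[symmetric] mult_ac)
    finally show ?thesis .
  qed (simp add: F_def)
  have step3: "(\<integral>\<^sup>+s. F x s \<partial>lborel) = ennreal (indicator A x) * GG lam xi v1 v2 x" for x
    unfolding F_def GG_def
    by (subst nn_integral_cmult[symmetric]) (auto simp: ind_Ioo ennreal_mult'[symmetric] intro!: nn_integral_cong)
  show ?thesis
    unfolding step1 using lborel_pair.Fubini'[OF Fm] step3 by simp
qed

lemma gamma_subst:
  assumes lam: "lam > 0" and xi: "xi > 0" and U[measurable]: "U \<in> sets borel"
  shows "ennreal (xi * exp (xi / lam)) * NN U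
    = (\<integral>\<^sup>+s. ennreal (indicator U (xi / lam + xi * s) * (xi * exp (- xi * s) / (1 / lam + s))) \<partial>lborel)"
proof -
  have "NN U = ennreal \<bar>xi\<bar> * (\<integral>\<^sup>+s. ennreal (indicator U (xi / lam + xi * s) * (exp (- (xi / lam + xi * s)) / (xi / lam + xi * s))) \<partial>lborel)"
    unfolding NN_def by (rule nn_integral_real_affine) (use xi in auto)
  also have "\<dots> = (\<integral>\<^sup>+s. ennreal (xi * (indicator U (xi / lam + xi * s) * (exp (- (xi / lam + xi * s)) / (xi / lam + xi * s)))) \<partial>lborel)"
    using xi by (subst nn_integral_cmult[symmetric]) (auto intro!: nn_integral_cong simp: ennreal_mult'[symmetric])
  finally have N: "NN U = \<dots>" .
  have gen: "xi * E * (xi * (a * ((e / E) / (xi * B)))) = a * (xi * e / B)" if "E > 0" for E a e B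
    using that xi by (cases "B = 0") (auto simp: field_simps)
  have pt: "xi * exp (xi / lam) * (xi * (indicator U (xi / lam + xi * s) * (exp (- (xi / lam + xi * s)) / (xi / lam + xi * s))))
     = indicator U (xi / lam + xi * s) * (xi * exp (- xi * s) / (1 / lam + s))" for s
  proof -
    have "exp (- (xi / lam + xi * s)) = exp (- xi * s) / exp (xi / lam)"
      by (simp add: exp_diff[symmetric] exp_minus[symmetric] algebra_simps)
    moreover have "xi / lam + xi * s = xi * (1 / lam + s)" by (simp add: algebra_simps)
    ultimately show ?thesis using gen[of "exp (xi / lam)"] by simp
  qed
  have "ennreal (xi * exp (xi / lam)) * NN U = (\<integral>\<^sup>+s. ennreal (xi * exp (xi / lam) * (xi * (indicator U (xi / lam + xi * s) * (exp (- (xi / lam + xi * s)) / (xi / lam + xi * s))))) \<partial>lborel)"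
    unfolding N using xi by (subst nn_integral_cmult[symmetric]) (auto intro!: nn_integral_cong simp: ennreal_mult'[symmetric])
  also have "\<dots> = (\<integral>\<^sup>+s. ennreal (indicator U (xi / lam + xi * s) * (xi * exp (- xi * s) / (1 / lam + s))) \<partial>lborel)"
    by (simp only: pt)
  finally show ?thesis .
qed

lemma NN_fin:
  assumes z: "z > 0" and U[measurable]: "U \<in> sets borel" and Uz: "U \<subseteq> {z..}"
  shows "NN U < top" and "set_lebesgue_integral lborel U (\<lambda>u. exp (- u) / u) = enn2real (NN U)"
proof -
  have "NN U \<le> (\<integral>\<^sup>+u. ennreal (1 / z) * (ennreal (1 * exp (- 1 * u)) * indicator {z..} u) \<partial>lborel)"
    unfolding NN_def
  proof (intro nn_integral_mono)
    fix u
    show "ennreal (indicator U u * (exp (- u) / u)) \<le> ennreal (1 / z) * (ennreal (1 * exp (- 1 * u)) * indicator {z..} u)"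
    proof (cases "u \<in> U")
      case True
      then have "u \<ge> z" using Uz by auto
      then have "exp (- u) / u \<le> exp (- u) / z" using z by (intro divide_left_mono) auto
      then show ?thesis using True \<open>u \<ge> z\<close> z by (simp add: ennreal_mult'[symmetric] divide_inverse mult.commute)
    qed simp
  qed
  also have "\<dots> = ennreal (1 / z) * ennreal (exp (- 1 * z))"
    using exp_tail[of 1 z] by (subst nn_integral_cmult) auto
  finally show "NN U < top"
    using ennreal_less_top le_less_trans by (metis ennreal_mult_less_top)
  show "set_lebesgue_integral lborel U (\<lambda>u. exp (- u) / u) = enn2real (NN U)"
    unfolding set_lebesgue_integral_def NN_def
  proof (subst integral_eq_nn_integral)
    show "AE x in lborel. 0 \<le> indicator U x *\<^sub>R (exp (- x) / x)"
    proof (rule AE_I2)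
      fix x show "0 \<le> indicator U x *\<^sub>R (exp (- x) / x)"
        using Uz z by (cases "x \<in> U") (auto intro!: divide_nonneg_pos less_le_trans[OF z])
    qed
  qed (auto simp: indicator_def)
qed

lemma GG_eq:
  assumes lam: "lam > 0" and xi: "xi > 0" and v12: "v2 < v1" and U[measurable]: "U \<in> sets borel"
    and AE: "AE s in lborel. (0 \<le> s \<and> v2 * s < x \<and> x < v1 * s) \<longleftrightarrow> (xi / lam + xi * s \<in> U)"
  shows "GG lam xi v1 v2 x = ennreal (1 / (v1 - v2)) * (ennreal (xi * exp (xi / lam)) * NN U)"
proof -
  have "ennreal (1 / (v1 - v2)) * (ennreal (xi * exp (xi / lam)) * NN U)
     = ennreal (1 / (v1 - v2)) * (\<integral>\<^sup>+s. ennreal (indicator U (xi / lam + xi * s) * (xi * exp (- xi * s) / (1 / lam + s))) \<partial>lborel)"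
    by (simp add: gamma_subst[OF lam xi U])
  also have "\<dots> = (\<integral>\<^sup>+s. ennreal (1 / (v1 - v2) * (indicator U (xi / lam + xi * s) * (xi * exp (- xi * s) / (1 / lam + s)))) \<partial>lborel)"
    using v12 by (subst nn_integral_cmult[symmetric]) (auto intro!: nn_integral_cong simp: ennreal_mult'[symmetric])
  also have "\<dots> = GG lam xi v1 v2 x"
    unfolding GG_def
  proof (rule nn_integral_cong_AE)
    show "AE s in lborel. ennreal (1 / (v1 - v2) * (indicator U (xi / lam + xi * s) * (xi * exp (- xi * s) / (1 / lam + s))))
      = ennreal (indicator {0..} s * (xi * exp (- xi * s) * (indicator {v2 * s <..< v1 * s} x * (lam / ((v1 - v2) * (1 + lam * s))))))"
      using AE
    proof eventually_elim
      case (elim s)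
      show ?case
      proof (cases "0 \<le> s \<and> v2 * s < x \<and> x < v1 * s")
        case True
        then have iU: "xi / lam + xi * s \<in> U" using elim by blast
        have p: "1 + lam * s > 0" using True lam by (simp add: add_pos_nonneg)
        have e: "1 / lam + s = (1 + lam * s) / lam" using lam by (simp add: field_simps)
        have gen: "1 / a * (E / (P / lam)) = E * (lam / (a * P))" for a E P
          using lam by (simp add: field_simps)
        show ?thesis using True iU unfolding e by (simp add: gen)
      next
        case False
        then have "xi / lam + xi * s \<notin> U" using elim by blast
        then show ?thesis using False by (auto simp: indicator_def)
      qed
    qed
  qed
  finally show ?thesis ..
qed

lemma exp_tail':
  fixes xi a :: real assumes xi: "xi > 0"
  shows "(\<integral>\<^sup>+s. ennreal (exp (- xi * s) * indicator {a..} s) \<partial>lborel) = ennreal (exp (- xi * a) / xi)"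
proof -
  have "(\<integral>\<^sup>+s. ennreal (exp (- xi * s) * indicator {a..} s) \<partial>lborel)
      = (\<integral>\<^sup>+s. ennreal (1 / xi) * (ennreal (xi * exp (- xi * s)) * indicator {a..} s) \<partial>lborel)"
    using xi by (intro nn_integral_cong) (auto simp: indicator_def ennreal_mult'[symmetric])
  also have "\<dots> = ennreal (1 / xi) * ennreal (exp (- xi * a))"
    using xi exp_tail[OF xi, of a] by (subst nn_integral_cmult) auto
  also have "\<dots> = ennreal (exp (- xi * a) / xi)"
    using xi by (simp add: ennreal_mult'[symmetric])
  finally show ?thesis .
qed

lemma GG_meas[measurable]: "GG lam xi v1 v2 \<in> borel_measurable borel"
  unfolding GG_def ind_Ioo by measurable

theorem corollary3:
  fixes lam xi v1 v2 :: real and j :: nat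
  assumes "lam > 0" and "xi > 0" and "v2 < v1"
    and "(v2 < 0 \<and> 0 < v1) \<or> 0 < v2"
    and "j \<in> {1, 2}"
  defines "plim \<equiv> (\<lambda>x::real. let vj = (if j = 1 then v1 else v2) in
      if v2 < 0 then
        sgn vj * (if x / vj > 0 then 1 else 0) * (xi * exp (- xi * x / vj) / (vj + lam * x))
        + xi * exp (xi / lam) / (v1 - v2) * upper_Gamma0 ((Mx v1 v2 x + 1 / lam) * xi)
      else
        (if x > 0 then 1 else 0) *
          (xi * exp (- xi * x / vj) / (vj + lam * x)
           + xi * exp (xi / lam) / (v1 - v2)
             * Gamma0_between ((x / v1 + 1 / lam) * xi) ((x / v2 + 1 / lam) * xi)))"
  shows "\<forall>\<epsilon>>0. \<exists>T. \<forall>t\<ge>T. \<forall>A\<in>sets borel.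
           \<bar>ptilde_prob lam xi v1 v2 (if j = 1 then v1 else v2) t A - (\<integral>x\<in>A. plim x \<partial>lborel)\<bar> < \<epsilon>"
proof -
  note lam = assms(1) and xi = assms(2) and v12 = assms(3) and cases = assms(4)
  define vj where "vj = (if j = 1 then v1 else v2)"
  have v1pos: "v1 > 0" using cases v12 by auto
  have vj0: "vj \<noteq> 0" using cases v12 unfolding vj_def by auto
  have vjpos: "\<not> v2 < 0 \<Longrightarrow> vj > 0" using cases v12 unfolding vj_def by auto
  define K where "K = xi * exp (xi / lam) / (v1 - v2)"
  have K0: "K > 0" unfolding K_def using xi v12 by simp
  have plim_x: "plim x = (if v2 < 0 then fD lam xi vj x + K * upper_Gamma0 ((Mx v1 v2 x + 1 / lam) * xi)
      else (if x > 0 then 1 else 0) * (xi * exp (- xi * x / vj) / (vj + lam * x)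
           + K * Gamma0_between ((x / v1 + 1 / lam) * xi) ((x / v2 + 1 / lam) * xi)))" for x
    unfolding plim_def Let_def vj_def[symmetric] K_def[symmetric] fD_def by (rule refl)
  have dec: "\<exists>U z. U \<in> sets borel \<and> z > 0 \<and> U \<subseteq> {z..}
     \<and> (AE s in lborel. (0 \<le> s \<and> v2 * s < x \<and> x < v1 * s) \<longleftrightarrow> (xi / lam + xi * s \<in> U))
     \<and> plim x = fD lam xi vj x + K * set_lebesgue_integral lborel U (\<lambda>u. exp (- u) / u)" for x
  proof (cases "v2 < 0")
    case True
    define M where "M = Mx v1 v2 x"
    have "x / v1 \<ge> 0 \<or> x / v2 \<ge> 0" using True v1pos
      by (cases "x \<ge> 0") (auto simp: divide_nonneg_pos divide_nonpos_neg)
    then have M0: "M \<ge> 0" unfolding M_def Mx_def by auto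
    define z where "z = (M + 1 / lam) * xi"
    have z0: "z > 0" unfolding z_def using M0 lam xi by (simp add: add_nonneg_pos)
    have eqv: "(0 \<le> s \<and> v2 * s < x \<and> x < v1 * s) \<longleftrightarrow> M < s" for s
    proof -
      have a: "v2 * s < x \<longleftrightarrow> x / v2 < s" using True by (simp add: neg_divide_less_eq mult.commute)
      have b: "x < v1 * s \<longleftrightarrow> x / v1 < s" using v1pos by (simp add: pos_divide_less_eq mult.commute)
      show ?thesis unfolding a b M_def Mx_def using M0[unfolded M_def Mx_def] by auto
    qed
    have eqv2: "(xi / lam + xi * s \<in> {z..}) \<longleftrightarrow> M \<le> s" for s
      unfolding z_def using xi by (auto simp: algebra_simps)
    have AE: "AE s in lborel. (0 \<le> s \<and> v2 * s < x \<and> x < v1 * s) \<longleftrightarrow> (xi / lam + xi * s \<in> {z..})"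
      using AE_lborel_singleton[of M] by eventually_elim (simp only: eqv eqv2, auto)
    have "plim x = fD lam xi vj x + K * set_lebesgue_integral lborel {z..} (\<lambda>u. exp (- u) / u)"
      unfolding plim_x using True by (simp add: upper_Gamma0_def z_def M_def)
    then show ?thesis using z0 AE by (intro exI[of _ "{z..}"] exI[of _ z]) auto
  next
    case False
    then have v2pos: "v2 > 0" using cases by auto
    have vjp: "vj > 0" using vjpos False by simp
    show ?thesis
    proof (cases "x > 0")
      case True
      define z0 where "z0 = (x / v1 + 1 / lam) * xi"
      define z1 where "z1 = (x / v2 + 1 / lam) * xi"
      have z0p: "z0 > 0" unfolding z0_def using True v1pos lam xi by (simp add: add_pos_pos)
      have eqv: "(0 \<le> s \<and> v2 * s < x \<and> x < v1 * s) \<longleftrightarrow> x / v1 < s \<and> s < x / v2" for s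
      proof -
        have a: "v2 * s < x \<longleftrightarrow> s < x / v2" using v2pos by (simp add: pos_less_divide_eq mult.commute)
        have b: "x < v1 * s \<longleftrightarrow> x / v1 < s" using v1pos by (simp add: pos_divide_less_eq mult.commute)
        have "x / v1 > 0" using True v1pos by simp
        then show ?thesis unfolding a b by auto
      qed
      have eqv2: "(xi / lam + xi * s \<in> {z0..z1}) \<longleftrightarrow> x / v1 \<le> s \<and> s \<le> x / v2" for s
      proof -
        have g1: "(a + 1 / lam) * xi \<le> xi / lam + xi * s \<longleftrightarrow> a \<le> s" for a
          using xi by (simp add: algebra_simps)
        have g2: "xi / lam + xi * s \<le> (a + 1 / lam) * xi \<longleftrightarrow> s \<le> a" for a
          using xi by (simp add: algebra_simps)
        show ?thesis unfolding z0_def z1_def atLeastAtMost_iff g1 g2 ..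
      qed
      have AE: "AE s in lborel. (0 \<le> s \<and> v2 * s < x \<and> x < v1 * s) \<longleftrightarrow> (xi / lam + xi * s \<in> {z0..z1})"
        using AE_lborel_singleton[of "x / v1"] AE_lborel_singleton[of "x / v2"]
        by eventually_elim (simp only: eqv eqv2, auto)
      have fDx: "fD lam xi vj x = xi * exp (- xi * x / vj) / (vj + lam * x)"
        unfolding fD_def using vjp True by simp
      have "plim x = fD lam xi vj x + K * set_lebesgue_integral lborel {z0..z1} (\<lambda>u. exp (- u) / u)"
        unfolding plim_x fDx using False True by (simp add: Gamma0_between_def z0_def z1_def)
      then show ?thesis using z0p AE by (intro exI[of _ "{z0..z1}"] exI[of _ z0]) auto
    next
      case False
      have AE: "AE s in lborel. (0 \<le> s \<and> v2 * s < x \<and> x < v1 * s) \<longleftrightarrow> (xi / lam + xi * s \<in> {})"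
      proof (rule AE_I2)
        fix s
        have "\<not> (0 \<le> s \<and> v2 * s < x)" using False v2pos
          by (smt (verit) mult_nonneg_nonneg)
        then show "(0 \<le> s \<and> v2 * s < x \<and> x < v1 * s) \<longleftrightarrow> (xi / lam + xi * s \<in> {})" by auto
      qed
      have fDx: "fD lam xi vj x = 0"
      proof -
        have "\<not> x / vj > 0" using vjp False by (simp add: zero_less_divide_iff)
        then show ?thesis unfolding fD_def by simp
      qed
      have "plim x = fD lam xi vj x + K * set_lebesgue_integral lborel {} (\<lambda>u. exp (- u) / u)"
        unfolding plim_x fDx using False \<open>\<not> v2 < 0\<close> by (simp add: set_lebesgue_integral_def)
      then show ?thesis using AE by (intro exI[of _ "{}"] exI[of _ 1]) auto
    qed
  qed
  have plimG: "ennreal (plim x) = ennreal (fD lam xi vj x) + GG lam xi v1 v2 x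
     \<and> plim x = fD lam xi vj x + enn2real (GG lam xi v1 v2 x) \<and> 0 \<le> plim x" for x
  proof -
    obtain U z where U[measurable]: "U \<in> sets borel" and z: "z > 0" "U \<subseteq> {z..}"
      and AE: "AE s in lborel. (0 \<le> s \<and> v2 * s < x \<and> x < v1 * s) \<longleftrightarrow> (xi / lam + xi * s \<in> U)"
      and px: "plim x = fD lam xi vj x + K * set_lebesgue_integral lborel U (\<lambda>u. exp (- u) / u)"
      using dec[of x] by blast
    note NN = NN_fin[OF z(1) U z(2)]
    have G: "GG lam xi v1 v2 x = ennreal (1 / (v1 - v2)) * (ennreal (xi * exp (xi / lam)) * NN U)"
      by (rule GG_eq[OF lam xi v12 U AE])
    also have "\<dots> = ennreal K * NN U"
    proof -
      have "1 / (v1 - v2) * (xi * exp (xi / lam)) = K" unfolding K_def by simp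
      moreover have "0 \<le> 1 / (v1 - v2)" using v12 by simp
      ultimately show ?thesis
        by (subst mult.assoc[symmetric], subst ennreal_mult'[symmetric]) auto
    qed
    also have "\<dots> = ennreal (K * enn2real (NN U))"
      using NN(1) K0 by (simp add: ennreal_mult' ennreal_enn2real less_top[symmetric])
    finally have G': "GG lam xi v1 v2 x = ennreal (K * enn2real (NN U))" .
    have g0: "0 \<le> K * enn2real (NN U)" using K0 by simp
    have f0: "0 \<le> fD lam xi vj x" using fD_nonneg[OF lam vj0] xi by simp
    show ?thesis unfolding px NN(2) G' using g0 f0 by (simp add: ennreal_plus)
  qed
  have plim_meas[measurable]: "plim \<in> borel_measurable borel"
  proof -
    have "plim = (\<lambda>x. fD lam xi vj x + enn2real (GG lam xi v1 v2 x))"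
      using plimG by auto
    then show ?thesis by simp
  qed
  have main: "\<bar>ptilde_prob lam xi v1 v2 vj t A - (\<integral>x\<in>A. plim x \<partial>lborel)\<bar> \<le> exp (- xi * t)"
    if t: "t \<ge> 0" and A[measurable]: "A \<in> sets borel" for t A
  proof -
    define Q where "Q s = exp (- xi * s) * p_prob lam v1 v2 vj s A" for s
    have Qm[measurable]: "Q \<in> borel_measurable borel" unfolding Q_def by measurable
    have Q0: "0 \<le> Q s" and Q1: "Q s \<le> exp (- xi * s)" if "s \<ge> 0" for s
      using p_bounds[OF lam v12 that A, of vj] unfolding Q_def by (auto simp: mult_left_le)
    define It where "It = (\<integral>\<^sup>+s. ennreal (indicator {0..t} s * Q s) \<partial>lborel)"
    define Tl where "Tl = (\<integral>\<^sup>+s. ennreal (indicator {t<..} s * Q s) \<partial>lborel)"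
    define Ia where "Ia = (\<integral>\<^sup>+s. ennreal (indicator {0..} s * Q s) \<partial>lborel)"
    have B1: "(\<integral>s\<in>{0..t}. exp (- xi * s) * p_prob lam v1 v2 vj s A \<partial>lborel) = enn2real It"
      unfolding set_lebesgue_integral_def It_def Q_def[symmetric]
    proof (subst integral_eq_nn_integral)
      show "AE x in lborel. 0 \<le> indicator {0..t} x *\<^sub>R Q x"
        by (rule AE_I2) (auto simp: indicator_def Q0)
    qed auto
    have B2: "(\<integral>x\<in>A. plim x \<partial>lborel) = enn2real (\<integral>\<^sup>+x. ennreal (indicator A x * plim x) \<partial>lborel)"
      unfolding set_lebesgue_integral_def
    proof (subst integral_eq_nn_integral)
      show "AE x in lborel. 0 \<le> indicator A x *\<^sub>R plim x"
      proof (rule AE_I2)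
        fix x have "0 \<le> plim x" using plimG[of x] by blast
        then show "0 \<le> indicator A x *\<^sub>R plim x" by (simp add: indicator_def)
      qed
    qed auto
    have B3: "(\<integral>\<^sup>+x. ennreal (indicator A x * plim x) \<partial>lborel) = ennreal xi * Ia"
    proof -
      define Ds where "Ds s = indicator {0..} s * (xi * exp (- xi * s) * (indicator A (vj * s) / (1 + lam * s)))" for s
      define Cs where "Cs s = indicator {0..} s * (xi * exp (- xi * s) * set_lebesgue_integral lborel A (\<lambda>x. indicator {v2 * s <..< v1 * s} x * (lam / ((v1 - v2) * (1 + lam * s)))))" for s
      have "(\<integral>\<^sup>+x. ennreal (indicator A x * plim x) \<partial>lborel)
          = (\<integral>\<^sup>+x. ennreal (indicator A x * fD lam xi vj x) + ennreal (indicator A x) * GG lam xi v1 v2 x \<partial>lborel)"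
      proof (intro nn_integral_cong)
        fix x
        have "ennreal (plim x) = ennreal (fD lam xi vj x) + GG lam xi v1 v2 x" using plimG[of x] by blast
        then show "ennreal (indicator A x * plim x) = ennreal (indicator A x * fD lam xi vj x) + ennreal (indicator A x) * GG lam xi v1 v2 x"
          by (cases "x \<in> A") auto
      qed
      also have "\<dots> = (\<integral>\<^sup>+x. ennreal (indicator A x * fD lam xi vj x) \<partial>lborel) + (\<integral>\<^sup>+x. ennreal (indicator A x) * GG lam xi v1 v2 x \<partial>lborel)"
        by (rule nn_integral_add) auto
      also have "\<dots> = (\<integral>\<^sup>+s. ennreal (Ds s) \<partial>lborel) + (\<integral>\<^sup>+s. ennreal (Cs s) \<partial>lborel)"
        unfolding Ds_def Cs_def Dpart[OF lam vj0 A] Cpart[OF lam v12 xi A] ..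
      also have "\<dots> = (\<integral>\<^sup>+s. ennreal (Ds s) + ennreal (Cs s) \<partial>lborel)"
        unfolding Ds_def Cs_def set_lebesgue_integral_def ind_Ioo by (rule nn_integral_add[symmetric]) auto
      also have "\<dots> = (\<integral>\<^sup>+s. ennreal xi * ennreal (indicator {0..} s * Q s) \<partial>lborel)"
      proof (intro nn_integral_cong)
        fix s
        show "ennreal (Ds s) + ennreal (Cs s) = ennreal xi * ennreal (indicator {0..} s * Q s)"
        proof (cases "s \<ge> 0")
          case True
          have p: "1 + lam * s > 0" using True lam by (simp add: add_pos_nonneg)
          have d0: "0 \<le> Ds s" unfolding Ds_def using True p xi by simp
          have c0: "0 \<le> Cs s" unfolding Cs_def
            by (intro mult_nonneg_nonneg Cnn(2)[OF lam v12 True A]) (use xi in auto)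
          have "Ds s + Cs s = xi * (indicator {0..} s * Q s)"
            unfolding Ds_def Cs_def Q_def p_prob_def using True by (simp add: algebra_simps)
          then show ?thesis using d0 c0 xi by (simp add: ennreal_plus[symmetric] ennreal_mult'[symmetric])
        qed (simp add: Ds_def Cs_def)
      qed
      also have "\<dots> = ennreal xi * Ia"
        unfolding Ia_def by (rule nn_integral_cmult) auto
      finally show ?thesis .
    qed
    have B4: "Ia = It + Tl"
      unfolding Ia_def It_def Tl_def
    proof (subst nn_integral_add[symmetric])
      show "(\<integral>\<^sup>+s. ennreal (indicator {0..} s * Q s) \<partial>lborel) = (\<integral>\<^sup>+s. ennreal (indicator {0..t} s * Q s) + ennreal (indicator {t<..} s * Q s) \<partial>lborel)"
      proof (intro nn_integral_cong)
        fix s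
        show "ennreal (indicator {0..} s * Q s) = ennreal (indicator {0..t} s * Q s) + ennreal (indicator {t<..} s * Q s)"
          using t Q0[of s] by (cases "s \<ge> 0"; cases "s \<le> t") (auto simp: indicator_def)
      qed
    qed auto
    have bound: "(\<integral>\<^sup>+s. ennreal (indicator S s * Q s) \<partial>lborel) \<le> ennreal (exp (- xi * a) / xi)"
      if "S \<subseteq> {a..}" "a \<ge> 0" for S a
    proof -
      have "(\<integral>\<^sup>+s. ennreal (indicator S s * Q s) \<partial>lborel) \<le> (\<integral>\<^sup>+s. ennreal (exp (- xi * s) * indicator {a..} s) \<partial>lborel)"
      proof (intro nn_integral_mono ennreal_leI)
        fix s show "indicator S s * Q s \<le> exp (- xi * s) * indicator {a..} s"
          using that Q1[of s] by (auto simp: indicator_def)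
      qed
      then show ?thesis using exp_tail'[OF xi, of a] by simp
    qed
    have TlB: "Tl \<le> ennreal (exp (- xi * t) / xi)" unfolding Tl_def by (rule bound) (use t in auto)
    have IaB: "Ia \<le> ennreal (exp (- xi * 0) / xi)" unfolding Ia_def by (rule bound) auto
    have Iafin: "Ia < top" using IaB ennreal_less_top le_less_trans by blast
    have Itfin: "It < top" and Tlfin: "Tl < top" using Iafin unfolding B4 by auto
    have Ia_r: "enn2real Ia = enn2real It + enn2real Tl"
      unfolding B4 using Itfin Tlfin by (simp add: enn2real_plus)
    have Tl_r: "0 \<le> enn2real Tl" "enn2real Tl \<le> exp (- xi * t) / xi"
      using enn2real_mono[OF TlB] xi by auto
    have L: "(\<integral>x\<in>A. plim x \<partial>lborel) = xi * (enn2real It + enn2real Tl)"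
      unfolding B2 B3 using xi by (simp add: enn2real_mult Ia_r)
    have P: "ptilde_prob lam xi v1 v2 vj t A = exp (- xi * t) * p_prob lam v1 v2 vj t A + xi * enn2real It"
      unfolding ptilde_prob_def B1 ..
    have pb: "0 \<le> p_prob lam v1 v2 vj t A" "p_prob lam v1 v2 vj t A \<le> 1"
      using p_bounds[OF lam v12 t A] by auto
    have e1: "0 \<le> exp (- xi * t) * p_prob lam v1 v2 vj t A" "exp (- xi * t) * p_prob lam v1 v2 vj t A \<le> exp (- xi * t)"
      using pb by (auto simp: mult_left_le)
    have e2: "0 \<le> xi * enn2real Tl" "xi * enn2real Tl \<le> exp (- xi * t)"
      using Tl_r xi by (auto simp: field_simps)
    show ?thesis unfolding P L distrib_left abs_le_iff using e1 e2 by linarith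
  qed
  show ?thesis
  proof (intro allI impI)
    fix \<epsilon> :: real assume e: "\<epsilon> > 0"
    define T where "T = (\<bar>ln \<epsilon>\<bar> + 1) / xi"
    have T0: "T \<ge> 0" unfolding T_def using xi by simp
    have "- xi * T < ln \<epsilon>" unfolding T_def using xi by simp
    then have eT: "exp (- xi * T) < \<epsilon>" using e by (metis exp_less_cancel_iff exp_ln)
    show "\<exists>T. \<forall>t\<ge>T. \<forall>A\<in>sets (borel :: real measure). \<bar>ptilde_prob lam xi v1 v2 (if j = 1 then v1 else v2) t A - (\<integral>x\<in>A. plim x \<partial>lborel)\<bar> < \<epsilon>"
    proof (intro exI[of _ T] allI impI ballI)
      fix t and A :: "real set" assume t: "T \<le> t" and A: "A \<in> sets borel"
      have "exp (- xi * t) \<le> exp (- xi * T)" using t xi by simp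
      then show "\<bar>ptilde_prob lam xi v1 v2 (if j = 1 then v1 else v2) t A - (\<integral>x\<in>A. plim x \<partial>lborel)\<bar> < \<epsilon>"
        using main[OF _ A, of t] t T0 eT unfolding vj_def by linarith
    qed
  qed
qed

end
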